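(* Let $\mathbf A\in\mathbb R^{m\times n}$, $\mathbf b\in\mathbb R^m$, $\sigma\ge 0$, and let $\mathbf x^0\in\mathbb R^n$ be an arbitrary vector with $\|\mathbf A\mathbf x^0-\mathbf b\|_2\le\sigma$. Let $\mathcal S$ be the set of indices of the $k$ largest components of $\mathbf x^0$ in magnitude and $\mathcal Z=\{1,\dots,n\}\setminus\mathcal S$. Let $\alpha>\|\mathbf x^0_{\mathcal Z}\|_\infty$ and let $\mathbf x^*$ be the solution of problem (P3). Then $\mathbf h:=\mathbf x^*-\mathbf x^0$ satisfies $$\|\mathbf h_{\mathcal Z}\|_1\le C_3\|\mathbf h_{\mathcal S}\|_1+C_4\|\mathbf x^0_{\mathcal Z}\|_1,\qquad C_3:=\frac{\alpha+\|\mathbf x^0_{\mathcal S}\|_\infty}{\alpha-\|\mathbf x^0_{\mathcal Z}\|_\infty},\quad C_4:=\frac{2\alpha}{\alpha-\|\mathbf x^0_{\mathcal Z}\|_\infty}.$$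
   Context: Problem (P3) is $\min_{\mathbf x\in\mathbb R^n}\{\|\mathbf x\|_1+\frac{1}{2\alpha}\|\mathbf x\|_2^2:\ \|\mathbf A\mathbf x-\mathbf b\|_2\le\sigma\}$ (its solution is unique by strict convexity). For a vector $\mathbf h$ and index set $\mathcal S$, $\mathbf h_{\mathcal S}$ denotes the restriction of $\mathbf h$ to the coordinates in $\mathcal S$. *)

theory Defs
  imports "HOL-Analysis.Analysis"
begin

definition l1_on :: "'n::finite set \<Rightarrow> real^'n \<Rightarrow> real" where
  "l1_on S x = (\<Sum>i\<in>S. \<bar>x $ i\<bar>)"

definition linf_on :: "'n::finite set \<Rightarrow> real^'n \<Rightarrow> real" where
  "linf_on S x = Max (insert 0 ((\<lambda>i. \<bar>x $ i\<bar>) ` S))"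

definition P3_obj :: "real \<Rightarrow> real^'n::finite \<Rightarrow> real" where
  "P3_obj \<alpha> x = l1_on UNIV x + (norm x)\<^sup>2 / (2 * \<alpha>)"

definition P3_solution ::
  "real^'n::finite^'m::finite \<Rightarrow> real^'m \<Rightarrow> real \<Rightarrow> real \<Rightarrow> real^'n \<Rightarrow> bool" where
  "P3_solution A b \<sigma> \<alpha> x \<longleftrightarrow>
     norm (A *v x - b) \<le> \<sigma> \<and>
     (\<forall>y. norm (A *v y - b) \<le> \<sigma> \<longrightarrow> P3_obj \<alpha> x \<le> P3_obj \<alpha> y)"

definition largest_k_support :: "nat \<Rightarrow> real^'n::finite \<Rightarrow> 'n set \<Rightarrow> bool" where
  "largest_k_support k x S \<longleftrightarrow> card S = k \<and>
     (\<forall>i\<in>S. \<forall>j\<in>UNIV - S. \<bar>x $ j\<bar> \<le> \<bar>x $ i\<bar>)"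

end

theory Submission
  imports Defs
begin

lemma norm_sq_vec: "(norm (x::real^'n))\<^sup>2 = (\<Sum>i\<in>UNIV. (x$i)\<^sup>2)"
  unfolding power2_norm_eq_inner inner_vec_def by (simp add: power2_eq_square)

lemma linf_ge: "i \<in> S \<Longrightarrow> \<bar>x $ i\<bar> \<le> linf_on S x"
  unfolding linf_on_def by (rule Max_ge) auto

lemma linf_nonneg: "0 \<le> linf_on S x"
  unfolding linf_on_def by (rule Max_ge) auto

theorem mainTheorem3:
  fixes A :: "real^'n::finite^'m::finite" and b :: "real^'m"
    and \<sigma> \<alpha> :: real and x0 xs :: "real^'n" and k :: nat and S :: "'n set"
  assumes "\<sigma> \<ge> 0"
    and "norm (A *v x0 - b) \<le> \<sigma>"
    and "largest_k_support k x0 S"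
    and "\<alpha> > linf_on (UNIV - S) x0"
    and "P3_solution A b \<sigma> \<alpha> xs"
  shows "l1_on (UNIV - S) (xs - x0) \<le>
           (\<alpha> + linf_on S x0) / (\<alpha> - linf_on (UNIV - S) x0) * l1_on S (xs - x0)
         + (2 * \<alpha>) / (\<alpha> - linf_on (UNIV - S) x0) * l1_on (UNIV - S) x0"
proof -
  define L1 where "L1 = linf_on S x0"
  define L2 where "L2 = linf_on (UNIV - S) x0"
  define h where "h = xs - x0"
  have L2: "0 \<le> L2" unfolding L2_def by (rule linf_nonneg)
  have aL: "\<alpha> > L2" using assms(4) L2_def by simp
  have apos: "\<alpha> > 0" using L2 aL by linarith
  define g where "g i = \<bar>x0$i + h$i\<bar> - \<bar>x0$i\<bar> + x0$i * h$i / \<alpha>" for i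
  have "P3_obj \<alpha> xs \<le> P3_obj \<alpha> x0" using assms(5,2) unfolding P3_solution_def by blast
  hence obj: "(\<Sum>i\<in>UNIV. \<bar>x0$i + h$i\<bar> + (x0$i + h$i)\<^sup>2 / (2*\<alpha>))
      \<le> (\<Sum>i\<in>UNIV. \<bar>x0$i\<bar> + (x0$i)\<^sup>2 / (2*\<alpha>))"
    unfolding P3_obj_def l1_on_def norm_sq_vec h_def
    by (simp add: sum.distrib sum_divide_distrib)
  have ptw: "g i + (h$i)\<^sup>2/(2*\<alpha>) = (\<bar>x0$i + h$i\<bar> + (x0$i + h$i)\<^sup>2 / (2*\<alpha>))
      - (\<bar>x0$i\<bar> + (x0$i)\<^sup>2 / (2*\<alpha>))" for i
    using apos unfolding g_def by (simp add: field_simps power2_eq_square)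
  have "(\<Sum>i\<in>UNIV. g i + (h$i)\<^sup>2/(2*\<alpha>)) \<le> 0"
    unfolding ptw using obj by (simp add: sum_subtractf)
  moreover have "(\<Sum>i\<in>UNIV. g i) \<le> (\<Sum>i\<in>UNIV. g i + (h$i)\<^sup>2/(2*\<alpha>))"
    by (rule sum_mono) (use apos in simp)
  ultimately have gsum: "(\<Sum>i\<in>UNIV. g i) \<le> 0" by linarith
  have gS: "g i \<ge> - \<bar>h$i\<bar> - L1 * \<bar>h$i\<bar> / \<alpha>" if "i \<in> S" for i
  proof -
    have a: "\<bar>x0$i\<bar> \<le> L1" unfolding L1_def using that by (rule linf_ge)
    have "\<bar>x0$i * h$i\<bar> \<le> L1 * \<bar>h$i\<bar>"
      unfolding abs_mult by (rule mult_right_mono[OF a]) simp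
    hence "x0$i * h$i \<ge> - (L1 * \<bar>h$i\<bar>)" by linarith
    hence "x0$i * h$i / \<alpha> \<ge> - (L1 * \<bar>h$i\<bar>) / \<alpha>"
      using apos divide_right_mono[of _ _ \<alpha>] by fastforce
    moreover have "\<bar>x0$i + h$i\<bar> - \<bar>x0$i\<bar> \<ge> - \<bar>h$i\<bar>" by linarith
    ultimately show ?thesis unfolding g_def by simp
  qed
  have gZ: "g i \<ge> \<bar>h$i\<bar> - 2 * \<bar>x0$i\<bar> - L2 * \<bar>h$i\<bar> / \<alpha>" if "i \<in> UNIV - S" for i
  proof -
    have a: "\<bar>x0$i\<bar> \<le> L2" unfolding L2_def using that by (rule linf_ge)
    have "\<bar>x0$i * h$i\<bar> \<le> L2 * \<bar>h$i\<bar>"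
      unfolding abs_mult by (rule mult_right_mono[OF a]) simp
    hence "x0$i * h$i \<ge> - (L2 * \<bar>h$i\<bar>)" by linarith
    hence "x0$i * h$i / \<alpha> \<ge> - (L2 * \<bar>h$i\<bar>) / \<alpha>"
      using apos divide_right_mono[of _ _ \<alpha>] by fastforce
    moreover have "\<bar>x0$i + h$i\<bar> - \<bar>x0$i\<bar> \<ge> \<bar>h$i\<bar> - 2 * \<bar>x0$i\<bar>" by linarith
    ultimately show ?thesis unfolding g_def by simp
  qed
  have s1: "(\<Sum>i\<in>S. g i) \<ge> - l1_on S h - L1 * l1_on S h / \<alpha>"
  proof -
    have "(\<Sum>i\<in>S. g i) \<ge> (\<Sum>i\<in>S. - \<bar>h$i\<bar> - L1 * \<bar>h$i\<bar> / \<alpha>)"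
      by (rule sum_mono) (use gS in auto)
    thus ?thesis unfolding l1_on_def
      by (simp add: sum_subtractf sum_negf sum_divide_distrib sum_distrib_left)
  qed
  have s2: "(\<Sum>i\<in>UNIV - S. g i) \<ge> l1_on (UNIV - S) h - 2 * l1_on (UNIV - S) x0
      - L2 * l1_on (UNIV - S) h / \<alpha>"
  proof -
    have "(\<Sum>i\<in>UNIV - S. g i) \<ge> (\<Sum>i\<in>UNIV - S. \<bar>h$i\<bar> - 2 * \<bar>x0$i\<bar> - L2 * \<bar>h$i\<bar> / \<alpha>)"
      by (rule sum_mono) (use gZ in auto)
    thus ?thesis unfolding l1_on_def
      by (simp add: sum_subtractf sum_divide_distrib sum_distrib_left)
  qed
  have split: "(\<Sum>i\<in>UNIV. g i) = (\<Sum>i\<in>S. g i) + (\<Sum>i\<in>UNIV - S. g i)"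
    by (metis add.commute finite sum.subset_diff top_greatest)
  have "l1_on (UNIV - S) h - L2 * l1_on (UNIV - S) h / \<alpha>
      \<le> l1_on S h + L1 * l1_on S h / \<alpha> + 2 * l1_on (UNIV - S) x0"
    using s1 s2 split gsum by linarith
  hence mul: "\<alpha> * (l1_on (UNIV - S) h - L2 * l1_on (UNIV - S) h / \<alpha>)
      \<le> \<alpha> * (l1_on S h + L1 * l1_on S h / \<alpha> + 2 * l1_on (UNIV - S) x0)"
    using apos by (simp add: mult_left_mono)
  have "(\<alpha> - L2) * l1_on (UNIV - S) h \<le> (\<alpha> + L1) * l1_on S h + 2 * \<alpha> * l1_on (UNIV - S) x0"
  proof -
    have e1: "\<alpha> * (l1_on (UNIV - S) h - L2 * l1_on (UNIV - S) h / \<alpha>) = (\<alpha> - L2) * l1_on (UNIV - S) h"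
      using apos by (simp add: algebra_simps)
    have e2: "\<alpha> * (l1_on S h + L1 * l1_on S h / \<alpha> + 2 * l1_on (UNIV - S) x0) = (\<alpha> + L1) * l1_on S h + 2 * \<alpha> * l1_on (UNIV - S) x0"
      using apos by (simp add: algebra_simps)
    show ?thesis using mul e1 e2 by simp
  qed
  hence "l1_on (UNIV - S) h \<le> ((\<alpha> + L1) * l1_on S h + 2 * \<alpha> * l1_on (UNIV - S) x0) / (\<alpha> - L2)"
    using aL by (simp add: pos_le_divide_eq mult.commute)
  thus ?thesis unfolding L1_def L2_def h_def by (metis add_divide_distrib times_divide_eq_left)
qed

end
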